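(* Let $\upsilon\in(0,1]$, $P_b>0$, $h>0$, $T>0$, $\sigma^2>0$, $B>0$, $L>0$. Define for $t>0$ $$S_{\mathrm{off}}(t)=\upsilon P_bhT+\left(\frac{\sigma^2}{h}-\upsilon P_bh\right)t-\frac{\sigma^2}{h}\,t\,2^{\frac{L}{Bt}}$$ and $$\rho(h)=\frac{\ln 2}{B\left[1+W\!\left(\frac{\upsilon P_bh^2}{\sigma^2e}-\frac1e\right)\right]},$$ where $W$ is the (principal branch of the) Lambert function, i.e. $W(x)e^{W(x)}=x$. Then $S_{\mathrm{off}}$ is a concave function on $(0,\infty)$ and it is maximized at $t=\rho(h)L$.
   Context: $S_{\mathrm{off}}(t)$ is the mobile energy savings when the offloading duration is $t$: the harvested energy $\upsilon P_bh(T-t)$ minus the transmission energy $(2^{L/(Bt)}-1)\frac{\sigma^2}{h}t$ for sending $L$ bits over bandwidth $B$ with channel gain $h$ and noise variance $\sigma^2$. *)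

theory Defs
  imports "HOL-Analysis.Analysis"
begin

text \<open>Principal branch W_0 of the Lambert W function: for x \<ge> -1/e, the unique
  w \<ge> -1 with w * exp w = x.\<close>
definition lambertW :: "real \<Rightarrow> real" where
  "lambertW x = (THE w. w \<ge> -1 \<and> w * exp w = x)"

definition S_off :: "real \<Rightarrow> real \<Rightarrow> real \<Rightarrow> real \<Rightarrow> real \<Rightarrow> real \<Rightarrow> real \<Rightarrow> real \<Rightarrow> real" where
  "S_off \<upsilon> Pb h T sigma2 B L t =
     \<upsilon> * Pb * h * T + (sigma2 / h - \<upsilon> * Pb * h) * t - sigma2 / h * t * 2 powr (L / (B * t))"

definition rho :: "real \<Rightarrow> real \<Rightarrow> real \<Rightarrow> real \<Rightarrow> real \<Rightarrow> real" where
  "rho \<upsilon> Pb sigma2 B h =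
     ln 2 / (B * (1 + lambertW (\<upsilon> * Pb * h^2 / (sigma2 * exp 1) - 1 / exp 1)))"

end

theory Submission
  imports Defs
begin

lemma h_anti:
  fixes u v :: real
  assumes "0 \<le> u" "u \<le> v"
  shows "exp v * (1 - v) \<le> exp u * (1 - u)"
proof -
  have "\<And>x. u \<le> x \<Longrightarrow> x \<le> v \<Longrightarrow> DERIV (\<lambda>x. exp x * (1 - x)) x :> - x * exp x"
    by (auto intro!: derivative_eq_intros simp: algebra_simps)
  moreover have "\<And>x. u \<le> x \<Longrightarrow> - x * exp x \<le> 0" using assms by simp
  ultimately show ?thesis
    using DERIV_nonpos_imp_nonincreasing[of u v "\<lambda>x. exp x * (1 - x)"] assms by blast
qed

lemma phi_deriv:
  fixes k t :: real
  assumes "t > 0"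
  shows "((\<lambda>t. t * exp (k / t)) has_real_derivative exp (k/t) * (1 - k/t)) (at t)"
  using assms
  by (auto intro!: derivative_eq_intros simp: field_simps power2_eq_square)

lemma wexp_strict:
  fixes v w :: real
  assumes "-1 \<le> v" "v < w"
  shows "v * exp v < w * exp w"
proof (rule DERIV_pos_imp_increasing_open[OF assms(2)])
  fix x assume "v < x" "x < w"
  then have "x > -1" using assms by simp
  have "DERIV (\<lambda>x. x * exp x) x :> (1 + x) * exp x"
    by (auto intro!: derivative_eq_intros simp: algebra_simps)
  moreover have "(1 + x) * exp x > 0" using \<open>x > -1\<close> by simp
  ultimately show "\<exists>y. DERIV (\<lambda>x. x * exp x) x :> y \<and> y > 0" by blast
next
  show "continuous_on {v..w} (\<lambda>x. x * exp x)"
    by (intro continuous_intros)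
qed

lemma lambertW_prop:
  fixes x :: real
  assumes "x > - 1 / exp 1"
  shows "lambertW x > -1 \<and> lambertW x * exp (lambertW x) = x"
proof -
  define b where "b = max x 0"
  have fa: "(-1) * exp (-1) \<le> x" using assms by (simp add: exp_minus field_simps)
  have fb: "x \<le> b * exp b"
  proof (cases "x \<le> 0")
    case True then show ?thesis by (simp add: b_def)
  next
    case False
    then have "b = x" by (simp add: b_def)
    moreover have "x * 1 \<le> x * exp x" using False by (intro mult_left_mono) auto
    ultimately show ?thesis by simp
  qed
  have "-1 \<le> b" by (simp add: b_def)
  have "continuous_on {-1..b} (\<lambda>x. x * exp x)" by (intro continuous_intros)
  from IVT'[of "\<lambda>x. x * exp x", OF fa fb \<open>-1 \<le> b\<close> this]
  obtain w where w: "-1 \<le> w" "w * exp w = x" by auto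
  have uniq: "w' = w" if "-1 \<le> w'" "w' * exp w' = x" for w'
  proof (rule ccontr)
    assume "w' \<noteq> w"
    then consider "w' < w" | "w < w'" by linarith
    then show False
    proof cases
      case 1 then show False using wexp_strict[of w' w] that w by simp
    next
      case 2 then show False using wexp_strict[of w w'] that w by simp
    qed
  qed
  have "lambertW x = w"
    unfolding lambertW_def
  proof (rule the_equality)
    show "-1 \<le> w \<and> w * exp w = x" using w by blast
  next
    fix w' assume "-1 \<le> w' \<and> w' * exp w' = x"
    then show "w' = w" using uniq by blast
  qed
  moreover have "w \<noteq> -1"
    using w assms by (auto simp: exp_minus field_simps)
  ultimately show ?thesis using w by auto
qed

theorem lemma4:
  fixes \<upsilon> Pb h T sigma2 B L :: real
  assumes "0 < \<upsilon>" "\<upsilon> \<le> 1" "Pb > 0" "h > 0" "T > 0" "sigma2 > 0" "B > 0" "L > 0"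
  shows "concave_on {0<..} (S_off \<upsilon> Pb h T sigma2 B L)
    \<and> rho \<upsilon> Pb sigma2 B h * L > 0
    \<and> (\<forall>t>0. S_off \<upsilon> Pb h T sigma2 B L t \<le> S_off \<upsilon> Pb h T sigma2 B L (rho \<upsilon> Pb sigma2 B h * L))"
proof -
  define a where "a = sigma2 / h"
  define c where "c = \<upsilon> * Pb * h"
  define k where "k = L * ln 2 / B"
  define C0 where "C0 = \<upsilon> * Pb * h * T"
  define S where "S = S_off \<upsilon> Pb h T sigma2 B L"
  define S' where "S' = (\<lambda>t. (a - c) - a * (exp (k/t) * (1 - k/t)))"
  have a0: "a > 0" using assms by (simp add: a_def)
  have c0: "c > 0" using assms by (simp add: c_def)
  have k0: "k > 0" using assms by (simp add: k_def)
  have Seq: "S t = C0 + (a - c) * t - a * (t * exp (k / t))" if "t > 0" for t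
  proof -
    have "L / (B * t) * ln 2 = k / t" using assms that by (simp add: k_def field_simps)
    then show ?thesis
      by (simp add: S_def S_off_def a_def c_def C0_def powr_def algebra_simps)
  qed
  have Sd: "(S has_real_derivative S' t) (at t)" if "t > 0" for t
  proof -
    have "((\<lambda>t. C0 + (a - c) * t - a * (t * exp (k / t))) has_real_derivative
           (a - c) - a * (exp (k/t) * (1 - k/t))) (at t)"
      using that
      by (auto intro!: derivative_eq_intros simp: field_simps power2_eq_square)
    then show ?thesis
      unfolding S'_def
      by (rule has_field_derivative_transform_within_open[where S="{0<..}"])
         (use that Seq in auto)
  qed
  have Smono: "S' t \<le> S' s" if "0 < s" "s \<le> t" for s t
  proof -
    have "k / t \<le> k / s" using that k0 by (intro divide_left_mono) auto
    moreover have "0 \<le> k / t" using that k0 by simp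
    ultimately have "exp (k/s) * (1 - k/s) \<le> exp (k/t) * (1 - k/t)" by (rule h_anti[rotated])
    then show ?thesis unfolding S'_def using a0 by (simp add: mult_left_mono)
  qed
  have conc: "concave_on {0<..} S"
    unfolding concave_on_def
  proof (rule convex_on_realI[where f'="\<lambda>t. - S' t"])
    show "connected {0::real<..}" by simp
    fix x assume "x \<in> {0::real<..}"
    then show "((\<lambda>x. - S x) has_real_derivative - S' x) (at x)"
      using Sd by (auto intro!: derivative_eq_intros)
  next
    fix x y :: real assume "x \<in> {0<..}" "y \<in> {0<..}" "x \<le> y"
    then show "- S' x \<le> - S' y" using Smono by simp
  qed
  define arg where "arg = \<upsilon> * Pb * h^2 / (sigma2 * exp 1) - 1 / exp 1"
  have arg_eq: "arg = (c / a - 1) / exp 1"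
    using assms by (simp add: arg_def a_def c_def field_simps power2_eq_square)
  have "arg > - 1 / exp 1" unfolding arg_eq using a0 c0 by (simp add: divide_strict_right_mono field_simps)
  from lambertW_prop[OF this]
  have w1: "lambertW arg > -1" and w2: "lambertW arg * exp (lambertW arg) = arg" by auto
  define w where "w = lambertW arg"
  define t0 where "t0 = rho \<upsilon> Pb sigma2 B h * L"
  have t0_eq: "t0 = k / (1 + w)"
    using assms w1 by (simp add: t0_def rho_def w_def arg_def k_def field_simps)
  have t0pos: "t0 > 0" unfolding t0_eq using k0 w1 w_def by simp
  have "k / t0 = 1 + w" unfolding t0_eq using k0 w1 w_def by simp
  then have "exp (k/t0) * (1 - k/t0) = - exp 1 * (w * exp w)"
    by (simp add: exp_add algebra_simps)
  also have "\<dots> = 1 - c / a" proof -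
    have "w * exp w = (c / a - 1) / exp 1" using w2 unfolding w_def arg_eq .
    then show ?thesis by (simp add: field_simps)
  qed
  finally have "S' t0 = 0" unfolding S'_def using a0 by (simp add: field_simps)
  have opt: "S t \<le> S t0" if tpos: "t > 0" for t
  proof -
    consider "t < t0" | "t = t0" | "t0 < t" by linarith
    then show ?thesis
    proof cases
      case 1
      have der: "DERIV S x :> S' x" if "t \<le> x" "x \<le> t0" for x
        by (rule Sd) (use that tpos in linarith)
      obtain z where z: "t < z" "z < t0" "S t0 - S t = (t0 - t) * S' z"
        using MVT2[OF 1 der] by blast
      have "S' t0 \<le> S' z" by (rule Smono) (use z tpos in linarith)+
      then have "0 \<le> (t0 - t) * S' z" using 1 \<open>S' t0 = 0\<close> by (intro mult_nonneg_nonneg) linarith+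
      then show ?thesis using z(3) by linarith
    next
      case 2 then show ?thesis by simp
    next
      case 3
      have der: "DERIV S x :> S' x" if "t0 \<le> x" "x \<le> t" for x
        by (rule Sd) (use that t0pos in linarith)
      obtain z where z: "t0 < z" "z < t" "S t - S t0 = (t - t0) * S' z"
        using MVT2[OF 3 der] by blast
      have "S' z \<le> S' t0" by (rule Smono) (use z t0pos in linarith)+
      then have "(t - t0) * S' z \<le> 0" using 3 \<open>S' t0 = 0\<close> by (intro mult_nonneg_nonpos) linarith+
      then show ?thesis using z(3) by linarith
    qed
  qed
  have "concave_on {0<..} S \<and> t0 > 0 \<and> (\<forall>t>0. S t \<le> S t0)"
    using conc t0pos opt by blast
  then show ?thesis unfolding S_def t0_def .
qed

end
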